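(* For every integer $m\ge3$ there is a binary minimal self-orthogonal linear code with parameters $[3\cdot2^{m-1}-1,\ m,\ 2^{m-1}]_2$ and maximum weight $2^m$ (constructed from the binary simplex $[2^m-1,m,2^{m-1}]_2$ code) which violates the Ashikhmin–Barg condition.
   Context: A code $\mathbf{C}$ is self-orthogonal if $\mathbf{C}\subseteq\mathbf{C}^\perp$ for the standard inner product. A binary linear code is minimal if any two nonzero codewords $\mathbf{c},\mathbf{c}'$ with $supp(\mathbf{c}')\subseteq supp(\mathbf{c})$ are equal. Ashikhmin–Barg condition (binary): $w_{min}/w_{max}>1/2$, where $w_{min},w_{max}$ are the minimum and maximum weights of nonzero codewords. The binary simplex code of dimension $m$ is generated by the $m\times(2^m-1)$ matrix whose columns are all nonzero vectors of $\mathbf{F}_2^m$. *)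

theory Defs
  imports Complex_Main "HOL-Library.Z2"
begin

definition words :: "nat \<Rightarrow> bit list set" where
  "words n = {x. length x = n}"

definition zero_word :: "nat \<Rightarrow> bit list" where
  "zero_word n = replicate n 0"

definition encode :: "nat \<Rightarrow> nat \<Rightarrow> (nat \<Rightarrow> nat \<Rightarrow> bit) \<Rightarrow> bit list \<Rightarrow> bit list" where
  "encode k n G u = map (\<lambda>j. \<Sum>i<k. u ! i * G i j) [0..<n]"

definition binary_linear_code :: "nat \<Rightarrow> nat \<Rightarrow> bit list set \<Rightarrow> bool" where
  "binary_linear_code n k C \<longleftrightarrow>
     (\<exists>G. C = encode k n G ` words k \<and> inj_on (encode k n G) (words k))"

definition supp :: "bit list \<Rightarrow> nat set" where
  "supp x = {i. i < length x \<and> x ! i \<noteq> 0}"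

definition wt :: "bit list \<Rightarrow> nat" where
  "wt x = card (supp x)"

definition inner :: "bit list \<Rightarrow> bit list \<Rightarrow> bit" where
  "inner x y = (\<Sum>i<length x. x ! i * y ! i)"

definition nonzero_words :: "nat \<Rightarrow> bit list set \<Rightarrow> bit list set" where
  "nonzero_words n C = C - {zero_word n}"

definition w_min :: "nat \<Rightarrow> bit list set \<Rightarrow> nat" where
  "w_min n C = Min (wt ` nonzero_words n C)"

definition w_max :: "nat \<Rightarrow> bit list set \<Rightarrow> nat" where
  "w_max n C = Max (wt ` nonzero_words n C)"

definition dual_code :: "nat \<Rightarrow> bit list set \<Rightarrow> bit list set" where
  "dual_code n C = {y \<in> words n. \<forall>c\<in>C. inner c y = 0}"

definition self_orthogonal :: "nat \<Rightarrow> bit list set \<Rightarrow> bool" where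
  "self_orthogonal n C \<longleftrightarrow> C \<subseteq> dual_code n C"

definition minimal_code :: "nat \<Rightarrow> bit list set \<Rightarrow> bool" where
  "minimal_code n C \<longleftrightarrow>
     (\<forall>c\<in>nonzero_words n C. \<forall>c'\<in>nonzero_words n C. supp c' \<subseteq> supp c \<longrightarrow> c = c')"

definition ashikhmin_barg :: "nat \<Rightarrow> bit list set \<Rightarrow> bool" where
  "ashikhmin_barg n C \<longleftrightarrow> real (w_min n C) / real (w_max n C) > 1 / 2"

end

theory Submission
  imports Defs
begin


lemma bit_cases2: "(x::bit) = 0 \<or> x = 1" by (cases x) auto

lemma UNIV_bit: "(UNIV :: bit set) = {0, 1}" using bit_cases2 by auto

lemma words_eq: "words m = {xs. set xs \<subseteq> UNIV \<and> length xs = m}"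
  by (auto simp: words_def)

lemma finite_words[simp]: "finite (words m)"
  unfolding words_eq by (rule finite_lists_length_eq) (simp add: UNIV_bit)

lemma card_words: "card (words m) = 2 ^ m"
  proof -
  have "card (UNIV::bit set) = 2" by (simp add: UNIV_bit)
  then show ?thesis unfolding words_eq by (metis card_lists_length_eq finite_UNIV_card_ge_0 card.infinite zero_neq_numeral)
qed

lemma of_nat_bit: "(of_nat k :: bit) = (if even k then 0 else 1)"
  by (induction k) auto

lemma sum_bit: "finite S \<Longrightarrow> sum (f :: 'a \<Rightarrow> bit) S = of_nat (card {x\<in>S. f x = 1})"
proof -
  assume fin: "finite S"
  have "sum f S = sum f {x\<in>S. f x = 1}"
    by (rule sum.mono_neutral_right) (use fin bit_cases2 in auto)
  also have "\<dots> = sum (\<lambda>_. 1) {x\<in>S. f x = 1}" by (rule sum.cong) auto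
  also have "\<dots> = of_nat (card {x\<in>S. f x = 1})" by simp
  finally show ?thesis .
qed

lemma inner_flip:
  assumes "i < length u" "length x = length u"
  shows "inner u (x[i := x!i + 1]) = inner u x + u ! i"
proof -
  have "inner u (x[i := x!i + 1]) = (\<Sum>k<length u. u!k * x!k + (if k = i then u!i else 0))"
    unfolding inner_def by (rule sum.cong) (use assms in \<open>auto simp: nth_list_update distrib_left\<close>)
  also have "\<dots> = inner u x + u!i"
    unfolding inner_def sum.distrib using assms by simp
  finally show ?thesis .
qed

lemma inner_zero: "inner (zero_word m) x = 0"
  by (simp add: inner_def zero_word_def)

lemma nonzero_ex: "u \<in> words m \<Longrightarrow> u \<noteq> zero_word m \<Longrightarrow> \<exists>i<m. u ! i = 1"
proof (rule ccontr)
  assume "u \<in> words m" "u \<noteq> zero_word m" "\<not> (\<exists>i<m. u ! i = 1)"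
  then have "u = zero_word m"
    by (intro nth_equalityI) (auto simp: words_def zero_word_def)
  then show False using \<open>u \<noteq> zero_word m\<close> by simp
qed

lemma count1:
  assumes "u \<in> words m" "u \<noteq> zero_word m"
  shows "card {x\<in>words m. inner u x = 1} = 2 ^ (m - 1)"
proof -
  obtain i where i: "i < m" "u ! i = 1" using nonzero_ex assms by blast
  have lu: "length u = m" using assms by (simp add: words_def)
  define f where "f = (\<lambda>x::bit list. x[i := x!i + 1])"
  have ff: "f (f x) = x" for x
  proof -
    have "(a::bit) + 1 + 1 = a" for a by (cases a) auto
    then show ?thesis unfolding f_def by (cases "i < length x") (auto simp: list_update_beyond)
  qed
  have fi: "x \<in> words m \<Longrightarrow> inner u (f x) = inner u x + 1" for x
    unfolding f_def using inner_flip[of i u x] i lu by (simp add: words_def)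
  have fw: "x \<in> words m \<Longrightarrow> f x \<in> words m" for x by (simp add: f_def words_def)
  have bb: "(a::bit) + 1 = 1 \<longleftrightarrow> a = 0" "(a::bit) + 1 = 0 \<longleftrightarrow> a = 1" for a
    by (cases a; simp)+
  have "bij_betw f {x\<in>words m. inner u x = 0} {x\<in>words m. inner u x = 1}"
  proof (rule bij_betw_byWitness[where f' = f])
    show "\<forall>a\<in>{x\<in>words m. inner u x = 0}. f (f a) = a" using ff by blast
    show "\<forall>a\<in>{x\<in>words m. inner u x = 1}. f (f a) = a" using ff by blast
    show "f ` {x\<in>words m. inner u x = 0} \<subseteq> {x\<in>words m. inner u x = 1}"
      using fi fw bb by (simp add: image_subset_iff)
    show "f ` {x\<in>words m. inner u x = 1} \<subseteq> {x\<in>words m. inner u x = 0}"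
      using fi fw bb by (simp add: image_subset_iff)
  qed
  then have c: "card {x\<in>words m. inner u x = 0} = card {x\<in>words m. inner u x = 1}"
    by (rule bij_betw_same_card)
  have U: "words m = {x\<in>words m. inner u x = 0} \<union> {x\<in>words m. inner u x = 1}"
    using bit_cases2 by auto
  have D: "{x\<in>words m. inner u x = 0} \<inter> {x\<in>words m. inner u x = 1} = {}" by auto
  have "card (words m) = card {x\<in>words m. inner u x = 0} + card {x\<in>words m. inner u x = 1}"
    by (subst U, rule card_Un_disjoint) (use D in auto)
  then have t: "2 ^ m = 2 * card {x\<in>words m. inner u x = 1}" using c card_words[of m] by simp
  have "(2::nat) ^ m = 2 * 2 ^ (m - 1)" using i(1) by (cases m) auto
  then show ?thesis using t by simp
qed



definition addw :: "bit list \<Rightarrow> bit list \<Rightarrow> bit list" where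
  "addw u v = map2 (+) u v"

lemma addw_words: "u \<in> words m \<Longrightarrow> v \<in> words m \<Longrightarrow> addw u v \<in> words m"
  by (simp add: addw_def words_def)

lemma addw_nth: "u \<in> words m \<Longrightarrow> v \<in> words m \<Longrightarrow> i < m \<Longrightarrow> addw u v ! i = u ! i + v ! i"
  by (simp add: addw_def words_def)

lemma inner_addw: "u \<in> words m \<Longrightarrow> v \<in> words m \<Longrightarrow> inner (addw u v) x = inner u x + inner v x"
proof -
  assume u: "u \<in> words m" and v: "v \<in> words m"
  have "inner (addw u v) x = (\<Sum>i<m. u ! i * x ! i + v ! i * x ! i)"
    unfolding inner_def
  proof (rule sum.cong)
    show "{..<length (addw u v)} = {..<m}" using u v by (simp add: addw_def words_def)
  next
    fix i assume "i \<in> {..<m}"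
    then have "addw u v ! i = u ! i + v ! i" using addw_nth[OF u v] by simp
    then show "addw u v ! i * x ! i = u ! i * x ! i + v ! i * x ! i" by (simp only: distrib_right)
  qed
  also have "\<dots> = inner u x + inner v x"
    unfolding inner_def sum.distrib using u v by (simp only: words_def mem_Collect_eq)
  finally show ?thesis .
qed

lemma addw_zero: "u \<in> words m \<Longrightarrow> v \<in> words m \<Longrightarrow> addw u v = zero_word m \<Longrightarrow> u = v"
proof (intro nth_equalityI)
  assume a: "u \<in> words m" "v \<in> words m" "addw u v = zero_word m"
  then show "length u = length v" by (simp add: words_def)
  fix i assume "i < length u"
  then have "u ! i + v ! i = 0" using a addw_nth[of u m v i]
    by (simp add: words_def zero_word_def)
  then show "u ! i = v ! i" by (cases "u ! i"; cases "v ! i") auto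
qed

lemma card_bij_filter: "bij_betw h A B \<Longrightarrow> card {j\<in>A. P (h j)} = card {x\<in>B. P x}"
proof -
  assume b: "bij_betw h A B"
  have "bij_betw h {j\<in>A. P (h j)} {x\<in>B. P x}"
    by (rule bij_betw_subset[OF b]) (use b in \<open>auto simp: bij_betw_def\<close>)
  then show ?thesis by (rule bij_betw_same_card)
qed

lemma bit_plus_1: "((a::bit) + b = 1) \<longleftrightarrow> ((a = 1 \<or> b = 1) \<and> \<not>(a = 1 \<and> b = 1))"
  by (cases a; cases b) auto

lemma bit_mult_1: "((a::bit) * b = 1) \<longleftrightarrow> (a = 1 \<and> b = 1)"
  by (cases a; cases b) auto

definition Gm :: "nat \<Rightarrow> (nat \<Rightarrow> bit list) \<Rightarrow> nat \<Rightarrow> nat \<Rightarrow> bit" where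
  "Gm m h i j = (if j < 2^m - 1 then h j ! i else if i = 0 then 1 else 0)"

lemma n_eq: "m \<ge> 1 \<Longrightarrow> (3::nat) * 2^(m-1) - 1 = (2^m - 1) + 2^(m-1)"
  by (cases m) auto

context
  fixes m :: nat and h :: "nat \<Rightarrow> bit list"
  assumes m3: "m \<ge> 3" and hb: "bij_betw h {0..<2^m-1} (words m - {zero_word m})"
begin

abbreviation "nn \<equiv> (3::nat) * 2^(m-1) - 1"
abbreviation "NN \<equiv> (2::nat)^m - 1"
abbreviation "cw \<equiv> encode m nn (Gm m h)"

lemma nn_eq: "nn = NN + 2^(m-1)" using n_eq m3 by simp

lemma cw_len: "length (cw u) = nn" by (simp add: encode_def)

lemma cw_nth: "u \<in> words m \<Longrightarrow> j < nn \<Longrightarrow> cw u ! j = (if j < NN then inner u (h j) else u ! 0)"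
proof -
  assume u: "u \<in> words m" and j: "j < nn"
  have "cw u ! j = (\<Sum>i<m. u ! i * Gm m h i j)" using j by (simp add: encode_def)
  also have "\<dots> = (if j < NN then inner u (h j) else u ! 0)"
  proof (cases "j < NN")
    case True then show ?thesis using u by (simp add: Gm_def inner_def words_def)
  next
    case False
    have "(\<Sum>i<m. u ! i * Gm m h i j) = (\<Sum>i<m. if i = 0 then u ! i else 0)"
      by (rule sum.cong) (use False in \<open>auto simp: Gm_def\<close>)
    also have "\<dots> = u ! 0" using m3 by (simp add: sum.delta)
    finally show ?thesis using False by simp
  qed
  finally show ?thesis .
qed

lemma cw_words: "cw u \<in> words nn" unfolding words_def using cw_len by blast

lemma supp_cw: "supp (cw u) = {j. j < nn \<and> cw u ! j = 1}"
  unfolding supp_def cw_len by auto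

lemma inner_zero2: "u \<in> words m \<Longrightarrow> inner u (zero_word m) = 0"
  unfolding inner_def by (rule sum.neutral) (auto simp: zero_word_def words_def)

lemma wt_cw: assumes u: "u \<in> words m" "u \<noteq> zero_word m"
  shows "wt (cw u) = 2^(m-1) + (if u ! 0 = 1 then 2^(m-1) else 0)"
proof -
  have s: "supp (cw u) = {j\<in>{0..<NN}. inner u (h j) = 1} \<union> (if u ! 0 = 1 then {NN..<nn} else {})"
    using supp_cw[of u] cw_nth[OF u(1)] nn_eq by (auto split: if_splits)
  have c1: "card {j\<in>{0..<NN}. inner u (h j) = 1} = card {x\<in>words m - {zero_word m}. inner u x = 1}"
    by (rule card_bij_filter[OF hb])
  also have "{x\<in>words m - {zero_word m}. inner u x = 1} = {x\<in>words m. inner u x = 1}"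
    using inner_zero2[OF u(1)] by auto
  also have "card \<dots> = 2^(m-1)" by (rule count1[OF u])
  finally have c1: "card {j\<in>{0..<NN}. inner u (h j) = 1} = 2^(m-1)" .
  show ?thesis unfolding wt_def s
    by (subst card_Un_disjoint) (use c1 nn_eq in auto)
qed


lemma count2: assumes u: "u \<in> words m" and v: "v \<in> words m"
  shows "even (card {x\<in>words m. inner u x = 1 \<and> inner v x = 1})"
proof -
  have e: "m - 1 = Suc (Suc (m - 3))" using m3 by arith
  have p: "2^(m-1) = 2 * (2 * 2^(m-3)::nat)" unfolding e by simp
  show ?thesis
  proof (cases "u = zero_word m \<or> v = zero_word m")
    case True then show ?thesis by (auto simp: inner_zero)
  next
    case False
    then have un: "u \<noteq> zero_word m" and vn: "v \<noteq> zero_word m" by auto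
    show ?thesis
    proof (cases "u = v")
      case True then show ?thesis using count1[OF u un] p by simp
    next
      case False
      define w where "w = addw u v"
      have w: "w \<in> words m" "w \<noteq> zero_word m" using addw_words[OF u v] addw_zero[OF u v] False
        by (auto simp: w_def)
      define A where "A = {x\<in>words m. inner u x = 1}"
      define B where "B = {x\<in>words m. inner v x = 1}"
      have C: "{x\<in>words m. inner w x = 1} = (A \<union> B) - (A \<inter> B)"
        unfolding A_def B_def w_def using inner_addw[OF u v] bit_plus_1
        by auto
      have fA: "finite A" "finite B" by (auto simp: A_def B_def)
      have cA: "card A = 2^(m-1)" "card B = 2^(m-1)" using count1[OF u un] count1[OF v vn]
        by (auto simp: A_def B_def)
      have cC: "card ((A \<union> B) - (A \<inter> B)) = 2^(m-1)" using count1[OF w] C by simp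
      have "card (A \<union> B) + card (A \<inter> B) = 2^(m-1) + 2^(m-1)"
        using card_Un_Int[OF fA] cA by simp
      moreover have "card ((A \<union> B) - (A \<inter> B)) = card (A \<union> B) - card (A \<inter> B)"
        by (rule card_Diff_subset) (use fA in auto)
      moreover have "card (A \<inter> B) \<le> card (A \<union> B)" by (rule card_mono) (use fA in auto)
      ultimately have "card (A \<inter> B) = 2 * 2^(m-3)" using cC p by linarith
      moreover have "A \<inter> B = {x\<in>words m. inner u x = 1 \<and> inner v x = 1}"
        by (auto simp: A_def B_def)
      ultimately show ?thesis by simp
    qed
  qed
qed



abbreviation "nnx \<equiv> (3::nat) * 2^(m-1) - 1"
abbreviation "NNx \<equiv> (2::nat)^m - 1"
abbreviation "cwx \<equiv> encode m nnx (Gm m h)"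



lemma m0: "0 < m" using m3 by simp

lemma cw_add: assumes u: "u \<in> words m" and v: "v \<in> words m" and j: "j < nnx"
  shows "cwx (addw u v) ! j = cwx u ! j + cwx v ! j"
  using cw_nth[OF addw_words[OF u v] j] cw_nth[OF u j] cw_nth[OF v j] inner_addw[OF u v]
    addw_nth[OF u v m0] by simp

lemma zero_words: "zero_word k \<in> words k" by (simp add: words_def zero_word_def)

lemma cw_zero: "cwx (zero_word m) = zero_word nnx"
proof (rule nth_equalityI)
  show "length (cwx (zero_word m)) = length (zero_word nnx)" using cw_len by (simp add: zero_word_def)
  fix j assume "j < length (cwx (zero_word m))"
  then have j: "j < nnx" using cw_len by simp
  show "cwx (zero_word m) ! j = zero_word nnx ! j"
    using cw_nth[OF zero_words j] inner_zero[of m] m0 j by (simp add: zero_word_def)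
qed

lemma wt_zero: "wt (zero_word k) = 0" by (simp add: wt_def supp_def zero_word_def)

lemma wt_pos: "u \<in> words m \<Longrightarrow> u \<noteq> zero_word m \<Longrightarrow> wt (cwx u) \<ge> 2^(m-1)"
  using wt_cw by simp

lemma cw_nz: "u \<in> words m \<Longrightarrow> u \<noteq> zero_word m \<Longrightarrow> cwx u \<noteq> zero_word nnx"
  using wt_pos wt_zero by (metis le_zero_eq power_not_zero zero_neq_numeral)

lemma cw_inj: "inj_on cwx (words m)"
proof (rule inj_onI, rule ccontr)
  fix u v assume u: "u \<in> words m" and v: "v \<in> words m" and e: "cwx u = cwx v" and ne: "u \<noteq> v"
  have w: "addw u v \<in> words m" "addw u v \<noteq> zero_word m" using addw_words[OF u v] addw_zero[OF u v] ne by auto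
  have "cwx (addw u v) = zero_word nnx"
  proof (rule nth_equalityI)
    show "length (cwx (addw u v)) = length (zero_word nnx)" using cw_len by (simp add: zero_word_def)
    fix j assume "j < length (cwx (addw u v))"
    then have j: "j < nnx" using cw_len by simp
    show "cwx (addw u v) ! j = zero_word nnx ! j"
      using cw_add[OF u v j] e j by (simp add: zero_word_def)
  qed
  then show False using cw_nz[OF w] by simp
qed

lemma nzw: "nonzero_words nnx (cwx ` words m) = cwx ` (words m - {zero_word m})"
  unfolding nonzero_words_def using cw_zero cw_nz by auto

definition "e0 = (1::bit) # replicate (m-1) 0"
definition "e1 = (0::bit) # 1 # replicate (m-2) 0"

lemma e0: "e0 \<in> words m - {zero_word m}" "e0 ! 0 = 1"
proof -
  have "e0 ! 0 \<noteq> zero_word m ! 0" using m3 by (simp add: e0_def zero_word_def)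
  then have ne: "e0 \<noteq> zero_word m" by metis
  have "e0 \<in> words m" using m3 by (simp add: e0_def words_def)
  then show "e0 \<in> words m - {zero_word m}" using ne by blast
qed (simp add: e0_def)
lemma e1: "e1 \<in> words m - {zero_word m}" "e1 ! 0 = 0"
proof -
  have "e1 ! 1 \<noteq> zero_word m ! 1" using m3 by (simp add: e1_def zero_word_def)
  then have ne: "e1 \<noteq> zero_word m" by metis
  have "e1 \<in> words m" using m3 by (simp add: e1_def words_def)
  then show "e1 \<in> words m - {zero_word m}" using ne by blast
qed (simp add: e1_def)

lemma pow_m: "(2::nat)^(m-1) + 2^(m-1) = 2^m"
  using m0 by (metis mult_2 power_Suc Suc_diff_1)

lemma wts: "wt ` nonzero_words nnx (cwx ` words m) = {2^(m-1), 2^m}"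
proof
  show "wt ` nonzero_words nnx (cwx ` words m) \<subseteq> {2^(m-1), 2^m}"
    unfolding nzw
  proof (rule image_subsetI)
    fix c assume "c \<in> cwx ` (words m - {zero_word m})"
    then obtain u where u: "u \<in> words m" "u \<noteq> zero_word m" and c: "c = cwx u" by auto
    show "wt c \<in> {2^(m-1), 2^m}"
    proof (cases "u ! 0 = 1")
      case True then show ?thesis using wt_cw[OF u] c pow_m by simp
    next
      case False then show ?thesis using wt_cw[OF u] c by simp
    qed
  qed
  have "wt (cwx e0) = 2^m" using wt_cw e0 pow_m by simp
  moreover have "wt (cwx e1) = 2^(m-1)" using wt_cw e1 by simp
  ultimately show "{2^(m-1), 2^m} \<subseteq> wt ` nonzero_words nnx (cwx ` words m)"
    unfolding nzw using e0 e1 by (metis empty_subsetI image_eqI insert_subset)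
qed

lemma wmin: "w_min nnx (cwx ` words m) = 2^(m-1)"
  unfolding w_min_def wts using pow_m by (simp add: min_def)

lemma wmax: "w_max nnx (cwx ` words m) = 2^m"
  unfolding w_max_def wts using pow_m by (simp add: max_def)

lemma cw_lo: "u \<in> words m \<Longrightarrow> j < NNx \<Longrightarrow> cwx u ! j = inner u (h j)"
  using cw_nth nn_eq by simp
lemma cw_hi: "u \<in> words m \<Longrightarrow> NNx \<le> j \<Longrightarrow> j < nnx \<Longrightarrow> cwx u ! j = u ! 0"
  using cw_nth by simp

lemma inner_cw: assumes u: "u \<in> words m" and v: "v \<in> words m"
  shows "inner (cwx u) (cwx v) = 0"
proof -
  have s0: "inner (cwx u) (cwx v) = (\<Sum>j\<in>{0..<nnx}. cwx u ! j * cwx v ! j)"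
    by (simp only: inner_def cw_len lessThan_atLeast0)
  have s1: "(\<Sum>j\<in>{0..<nnx}. cwx u ! j * cwx v ! j) = (\<Sum>j\<in>{0..<NNx}. cwx u ! j * cwx v ! j) + (\<Sum>j\<in>{NNx..<nnx}. cwx u ! j * cwx v ! j)"
    by (rule sum.atLeastLessThan_concat[symmetric]) (use nn_eq in auto)
  have s2: "(\<Sum>j\<in>{0..<NNx}. cwx u ! j * cwx v ! j) = (\<Sum>j\<in>{0..<NNx}. inner u (h j) * inner v (h j))"
    by (rule sum.cong[OF refl]) (simp only: cw_lo[OF u] cw_lo[OF v] atLeastLessThan_iff)
  have s3: "(\<Sum>j\<in>{0..<NNx}. inner u (h j) * inner v (h j)) = (\<Sum>x\<in>words m - {zero_word m}. inner u x * inner v x)"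
    by (rule sum.reindex_bij_betw[OF hb])
  have s4: "(\<Sum>x\<in>words m - {zero_word m}. inner u x * inner v x) = of_nat (card {x\<in>words m - {zero_word m}. inner u x * inner v x = 1})"
    by (rule sum_bit) simp
  have s5: "{x\<in>words m - {zero_word m}. inner u x * inner v x = 1} = {x\<in>words m. inner u x = 1 \<and> inner v x = 1}"
    using inner_zero2[OF u] bit_mult_1 by auto
  have s6: "(of_nat (card {x\<in>words m. inner u x = 1 \<and> inner v x = 1}) :: bit) = 0"
    using count2[OF u v] of_nat_bit by simp
  have s7: "(\<Sum>j\<in>{NNx..<nnx}. cwx u ! j * cwx v ! j) = (\<Sum>j\<in>{NNx..<nnx}. u ! 0 * v ! 0)"
    by (rule sum.cong[OF refl]) (simp only: cw_hi[OF u] cw_hi[OF v] atLeastLessThan_iff)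
  have s8: "(\<Sum>j\<in>{NNx..<nnx}. u ! 0 * v ! 0) = of_nat (2^(m-1)) * (u ! 0 * v ! 0)"
    using nn_eq by (simp only: sum_constant card_atLeastLessThan) simp
  have s9: "(of_nat (2^(m-1)) :: bit) = 0" using m3 of_nat_bit[of "2^(m-1)"] by simp
  show ?thesis using s0 s1 s2 s3 s4 s5 s6 s7 s8 s9 by (simp only: mult_zero_left add_0)
qed

lemma selforth: "self_orthogonal nnx (cwx ` words m)"
  unfolding self_orthogonal_def dual_code_def using cw_words inner_cw by auto

lemma supp_eq_imp: "length c = length d \<Longrightarrow> supp c = supp d \<Longrightarrow> c = (d::bit list)"
proof (rule nth_equalityI)
  assume l: "length c = length d" and s: "supp c = supp d"
  show "length c = length d" by fact
  fix i assume i: "i < length c"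
  have "(c ! i = 1) = (d ! i = 1)" using s i l unfolding supp_def by (auto simp: set_eq_iff)
  then show "c ! i = d ! i" by (metis bit_not_one_iff)
qed

lemma finite_supp: "finite (supp c)" by (simp add: supp_def)

lemma minimal: "minimal_code nnx (cwx ` words m)"
  unfolding minimal_code_def nzw
proof (intro ballI impI)
  fix c c' assume c: "c \<in> cwx ` (words m - {zero_word m})" and c': "c' \<in> cwx ` (words m - {zero_word m})"
    and sub: "supp c' \<subseteq> supp c"
  obtain u where u: "u \<in> words m" "u \<noteq> zero_word m" and cu: "c = cwx u" using c by auto
  obtain v where v: "v \<in> words m" "v \<noteq> zero_word m" and cv: "c' = cwx v" using c' by auto
  have le: "wt c' \<le> wt c" unfolding wt_def by (rule card_mono[OF finite_supp sub])
  have pp: "(2::nat)^(m-1) < 2^m" using pow_m m0 by simp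
  show "c = c'"
  proof (cases "wt c' = wt c")
    case True
    then have "supp c' = supp c" unfolding wt_def by (intro card_subset_eq[OF finite_supp sub])
    then show ?thesis using cu cv cw_len supp_eq_imp by metis
  next
    case False
    then have "u ! 0 = 1" "v ! 0 = 0" using le wt_cw[OF u] wt_cw[OF v] cu cv bit_cases2[of "u!0"] bit_cases2[of "v!0"]
      by (auto split: if_splits)
    define w where "w = addw u v"
    have w: "w \<in> words m" "w ! 0 = 1" using addw_words[OF u(1) v(1)] addw_nth[OF u(1) v(1) m0] \<open>u!0 = 1\<close> \<open>v!0=0\<close>
      by (auto simp: w_def)
    then have wn: "w \<noteq> zero_word m" using m0 by (auto simp: zero_word_def)
    have "supp (cwx w) = supp c - supp c'"
    proof -
      have "supp (cwx w) = {j. j < nnx \<and> cwx w ! j = 1}" by (rule supp_cw)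
      also have "\<dots> = {j. j < nnx \<and> c ! j = 1} - {j. j < nnx \<and> c' ! j = 1}"
        using cw_add[OF u(1) v(1)] sub bit_plus_1 unfolding w_def cu cv supp_cw by auto
      finally show ?thesis unfolding cu cv supp_cw .
    qed
    then have "wt (cwx w) = wt c - wt c'" unfolding wt_def using card_Diff_subset[OF finite_supp sub] by simp
    also have "\<dots> = 2^(m-1)"
    proof -
      have pm2: "(2::nat)^m - 2^(m-1) = 2^(m-1)" using pow_m by linarith
      show ?thesis using wt_cw[OF u] wt_cw[OF v] cu cv \<open>u!0 = 1\<close> \<open>v!0=0\<close> pm2 by simp
    qed
    finally show ?thesis using wt_cw[OF w(1) wn] w(2) pp by simp
  qed
qed

lemma blc: "binary_linear_code nnx m (cwx ` words m)"
  unfolding binary_linear_code_def using cw_inj by blast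

end


lemma notab: assumes "w_min n C = 2^(m-1)" "w_max n C = 2^m" "m \<ge> 1"
  shows "\<not> ashikhmin_barg n C"
proof -
  obtain k where k: "m = Suc k" using assms(3) by (cases m) auto
  have "real (w_min n C) / real (w_max n C) = 1 / 2"
    unfolding assms(1,2) k by simp
  then show ?thesis unfolding ashikhmin_barg_def by simp
qed
theorem proposition5p2:
  fixes m :: nat
  assumes "m \<ge> 3"
  shows "\<exists>C. binary_linear_code (3 * 2^(m-1) - 1) m C
           \<and> w_min (3 * 2^(m-1) - 1) C = 2^(m-1)
           \<and> w_max (3 * 2^(m-1) - 1) C = 2^m
           \<and> self_orthogonal (3 * 2^(m-1) - 1) C
           \<and> minimal_code (3 * 2^(m-1) - 1) C
           \<and> \<not> ashikhmin_barg (3 * 2^(m-1) - 1) C"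
proof -
  have zw: "zero_word m \<in> words m" by (simp add: words_def zero_word_def)
  have card: "card (words m - {zero_word m}) = (2::nat)^m - 1"
    using card_words[of m] zw by (simp add: card_Diff_singleton)
  obtain h where hb: "bij_betw h {0..<(2::nat)^m-1} (words m - {zero_word m})"
    using ex_bij_betw_nat_finite[of "words m - {zero_word m}"] card by auto
  have m1: "m \<ge> 1" using assms by simp
  show ?thesis
    by (rule exI[of _ "encode m (3 * 2^(m-1) - 1) (Gm m h) ` words m"])
      (use blc[OF assms hb] wmin[OF assms hb] wmax[OF assms hb] selforth[OF assms hb]
        minimal[OF assms hb] notab[OF wmin[OF assms hb] wmax[OF assms hb] m1] in blast)
qed

end
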